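(* Let $S$ be a quasi-adequate semigroup with an adequate transversal $S^0$. Then $S$ is orthodox if and only if $S^0$ is an inverse semigroup.
   Context: For a semigroup $S$, $S^1$ is $S$ with an identity adjoined, $\mathcal{L},\mathcal{R}$ Green's relations. $\mathcal{R}^\ast=\{(a,b):\forall x,y\in S^1,\ xa=ya\iff xb=yb\}$, $\mathcal{L}^\ast=\{(a,b):\forall x,y\in S^1,\ ax=ay\iff bx=by\}$. $S$ is abundant if each $\mathcal{R}^\ast$- and $\mathcal{L}^\ast$-class contains an idempotent; adequate if also idempotents commute (then $a^+$, $a^\ast$ are the unique idempotents $\mathcal{R}^\ast$-, resp. $\mathcal{L}^\ast$-related to $a$). Quasi-adequate: abundant with idempotents forming a subsemigroup; orthodox: regular with idempotents forming a subsemigroup. An abundant subsemigroup $U$ of abundant $S$ is a $\ast$-subsemigroup if $\mathcal{L}^\ast(U)=\mathcal{L}^\ast(S)\cap(U\times U)$, $\mathcal{R}^\ast(U)=\mathcal{R}^\ast(S)\cap(U\times U)$. An adequate $\ast$-subsemigroup $S^0$ of abundant $S$ is an adequate transversal if each $x\in S$ has a unique $\overline{x}\in S^0$ and idempotents $e,f$ of $S$ with $x=e\overline{x}f$, $e\,\mathcal{L}\,\overline{x}^+$, $f\,\mathcal{R}\,\overline{x}^\ast$. *)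

theory Defs
  imports Main
begin

text \<open>A semigroup is modelled as a subset U of a type with an associative
multiplication, closed under multiplication. Elements of U^1 (U with an
adjoined identity) are represented by 'a option: None is the adjoined identity.\<close>

definition subsemigroup :: "'a::semigroup_mult set \<Rightarrow> bool" where
  "subsemigroup U \<longleftrightarrow> (\<forall>a\<in>U. \<forall>b\<in>U. a * b \<in> U)"

definition one_ext :: "'a set \<Rightarrow> 'a option set" where
  "one_ext U = insert None (Some ` U)"

fun lmul :: "'a::semigroup_mult option \<Rightarrow> 'a \<Rightarrow> 'a" where
  "lmul None a = a"
| "lmul (Some x) a = x * a"

fun rmul :: "'a::semigroup_mult \<Rightarrow> 'a option \<Rightarrow> 'a" where
  "rmul a None = a"
| "rmul a (Some x) = a * x"

definition idems :: "'a::semigroup_mult set \<Rightarrow> 'a set" where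
  "idems U = {e \<in> U. e * e = e}"

definition greenL :: "'a::semigroup_mult set \<Rightarrow> 'a \<Rightarrow> 'a \<Rightarrow> bool" where
  "greenL U a b \<longleftrightarrow> a \<in> U \<and> b \<in> U \<and>
     (\<lambda>x. lmul x a) ` one_ext U = (\<lambda>x. lmul x b) ` one_ext U"

definition greenR :: "'a::semigroup_mult set \<Rightarrow> 'a \<Rightarrow> 'a \<Rightarrow> bool" where
  "greenR U a b \<longleftrightarrow> a \<in> U \<and> b \<in> U \<and>
     (\<lambda>x. rmul a x) ` one_ext U = (\<lambda>x. rmul b x) ` one_ext U"

definition Rstar :: "'a::semigroup_mult set \<Rightarrow> 'a \<Rightarrow> 'a \<Rightarrow> bool" where
  "Rstar U a b \<longleftrightarrow> a \<in> U \<and> b \<in> U \<and>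
     (\<forall>x\<in>one_ext U. \<forall>y\<in>one_ext U. lmul x a = lmul y a \<longleftrightarrow> lmul x b = lmul y b)"

definition Lstar :: "'a::semigroup_mult set \<Rightarrow> 'a \<Rightarrow> 'a \<Rightarrow> bool" where
  "Lstar U a b \<longleftrightarrow> a \<in> U \<and> b \<in> U \<and>
     (\<forall>x\<in>one_ext U. \<forall>y\<in>one_ext U. rmul a x = rmul a y \<longleftrightarrow> rmul b x = rmul b y)"

definition abundant :: "'a::semigroup_mult set \<Rightarrow> bool" where
  "abundant U \<longleftrightarrow> subsemigroup U \<and>
     (\<forall>a\<in>U. (\<exists>e\<in>idems U. Rstar U a e) \<and> (\<exists>e\<in>idems U. Lstar U a e))"

definition adequate :: "'a::semigroup_mult set \<Rightarrow> bool" where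
  "adequate U \<longleftrightarrow> abundant U \<and> (\<forall>e\<in>idems U. \<forall>f\<in>idems U. e * f = f * e)"

definition quasi_adequate :: "'a::semigroup_mult set \<Rightarrow> bool" where
  "quasi_adequate U \<longleftrightarrow> abundant U \<and> (\<forall>e\<in>idems U. \<forall>f\<in>idems U. e * f \<in> idems U)"

definition regular :: "'a::semigroup_mult set \<Rightarrow> bool" where
  "regular U \<longleftrightarrow> subsemigroup U \<and> (\<forall>a\<in>U. \<exists>x\<in>U. a * x * a = a)"

definition orthodox :: "'a::semigroup_mult set \<Rightarrow> bool" where
  "orthodox U \<longleftrightarrow> regular U \<and> (\<forall>e\<in>idems U. \<forall>f\<in>idems U. e * f \<in> idems U)"

definition inverse_semigroup :: "'a::semigroup_mult set \<Rightarrow> bool" where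
  "inverse_semigroup U \<longleftrightarrow> regular U \<and> (\<forall>e\<in>idems U. \<forall>f\<in>idems U. e * f = f * e)"

definition plus :: "'a::semigroup_mult set \<Rightarrow> 'a \<Rightarrow> 'a" where
  "plus U a = (THE e. e \<in> idems U \<and> Rstar U a e)"

definition star :: "'a::semigroup_mult set \<Rightarrow> 'a \<Rightarrow> 'a" where
  "star U a = (THE e. e \<in> idems U \<and> Lstar U a e)"

definition star_subsemigroup :: "'a::semigroup_mult set \<Rightarrow> 'a set \<Rightarrow> bool" where
  "star_subsemigroup U S \<longleftrightarrow> abundant S \<and> abundant U \<and> U \<subseteq> S \<and>
     (\<forall>a\<in>U. \<forall>b\<in>U. (Lstar U a b \<longleftrightarrow> Lstar S a b) \<and> (Rstar U a b \<longleftrightarrow> Rstar S a b))"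

definition adequate_transversal :: "'a::semigroup_mult set \<Rightarrow> 'a set \<Rightarrow> bool" where
  "adequate_transversal S0 S \<longleftrightarrow> adequate S0 \<and> star_subsemigroup S0 S \<and>
     (\<forall>x\<in>S. \<exists>!xb. xb \<in> S0 \<and> (\<exists>e\<in>idems S. \<exists>f\<in>idems S.
        x = e * xb * f \<and> greenL S e (plus S0 xb) \<and> greenR S f (star S0 xb)))"

end

theory Submission
  imports Defs
begin

lemma Rstar_use:
  assumes "Rstar U a e" "x \<in> U" "z \<in> U" "x*a = z*a" shows "x*e = z*e"
proof -
  have "(lmul (Some x) a = lmul (Some z) a) = (lmul (Some x) e = lmul (Some z) e)"
    using assms(1-3) by (auto simp: Rstar_def one_ext_def)
  thus ?thesis using assms(4) by simp
qed

lemma Rstar_use2: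
  assumes "Rstar U a e" "x \<in> U" "x*a = a" shows "x*e = e"
proof -
  have "(lmul (Some x) a = lmul None a) = (lmul (Some x) e = lmul None e)"
    using assms(1-2) by (auto simp: Rstar_def one_ext_def)
  thus ?thesis using assms(3) by simp
qed

lemma Lstar_use:
  assumes "Lstar U a e" "x \<in> U" "z \<in> U" "a*x = a*z" shows "e*x = e*z"
proof -
  have "(rmul a (Some x) = rmul a (Some z)) = (rmul e (Some x) = rmul e (Some z))"
    using assms(1-3) by (auto simp: Lstar_def one_ext_def)
  thus ?thesis using assms(4) by simp
qed

lemma Lstar_use2:
  assumes "Lstar U a e" "x \<in> U" "a*x = a" shows "e*x = e"
proof -
  have "(rmul a (Some x) = rmul a None) = (rmul e (Some x) = rmul e None)"
    using assms(1-2) by (auto simp: Lstar_def one_ext_def)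
  thus ?thesis using assms(3) by simp
qed

lemma Rstar_idem_left: "Rstar U a e \<Longrightarrow> e \<in> idems U \<Longrightarrow> e*a = a"
  by (rule Rstar_use2[where U=U and e=a]) (auto simp: Rstar_def idems_def)

lemma Lstar_idem_right: "Lstar U a e \<Longrightarrow> e \<in> idems U \<Longrightarrow> a*e = a"
  by (rule Lstar_use2[where U=U and e=a]) (auto simp: Lstar_def idems_def)

lemma lmul_assoc: "lmul x (a*b) = lmul x a * b"
  by (cases x) (simp_all add: mult.assoc)

lemma rmul_assoc: "rmul (a*b) x = a * rmul b x"
  by (cases x) (simp_all add: mult.assoc)

lemma plus_prop:
  assumes "adequate U" "a \<in> U"
  shows "plus U a \<in> idems U \<and> Rstar U a (plus U a)"
proof -
  have ab: "abundant U" using assms(1) by (simp add: adequate_def)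
  have "\<exists>e\<in>idems U. Rstar U a e" using ab assms(2) unfolding abundant_def by blast
  then obtain e where e: "e \<in> idems U" "Rstar U a e" by blast
  have eU: "e \<in> U" using e(1) by (simp add: idems_def)
  have uniq: "g = e" if g: "g \<in> idems U" "Rstar U a g" for g
  proof -
    have gU: "g \<in> U" using g(1) by (simp add: idems_def)
    have 1: "g*e = e" by (rule Rstar_use2[OF e(2) gU Rstar_idem_left[OF g(2,1)]])
    have 2: "e*g = g" by (rule Rstar_use2[OF g(2) eU Rstar_idem_left[OF e(2,1)]])
    have "e*g = g*e" using assms(1) e(1) g(1) unfolding adequate_def by blast
    thus ?thesis using 1 2 by simp
  qed
  have "plus U a = e" unfolding plus_def
    by (rule the_equality) (use e uniq in blast)+
  thus ?thesis using e by simp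
qed

lemma star_prop:
  assumes "adequate U" "a \<in> U"
  shows "star U a \<in> idems U \<and> Lstar U a (star U a)"
proof -
  have ab: "abundant U" using assms(1) by (simp add: adequate_def)
  have "\<exists>e\<in>idems U. Lstar U a e" using ab assms(2) unfolding abundant_def by blast
  then obtain e where e: "e \<in> idems U" "Lstar U a e" by blast
  have eU: "e \<in> U" using e(1) by (simp add: idems_def)
  have uniq: "g = e" if g: "g \<in> idems U" "Lstar U a g" for g
  proof -
    have gU: "g \<in> U" using g(1) by (simp add: idems_def)
    have 1: "e*g = e" by (rule Lstar_use2[OF e(2) gU Lstar_idem_right[OF g(2,1)]])
    have 2: "g*e = g" by (rule Lstar_use2[OF g(2) eU Lstar_idem_right[OF e(2,1)]])
    have "e*g = g*e" using assms(1) e(1) g(1) unfolding adequate_def by blast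
    thus ?thesis using 1 2 by simp
  qed
  have "star U a = e" unfolding star_def
    by (rule the_equality) (use e uniq in blast)+
  thus ?thesis using e by simp
qed

lemma greenL_idem:
  assumes "greenL U e p" "e \<in> idems U" "p \<in> idems U"
  shows "p*e = p \<and> e*p = e"
proof -
  have im: "(\<lambda>x. lmul x e) ` one_ext U = (\<lambda>x. lmul x p) ` one_ext U"
    using assms(1) by (simp add: greenL_def)
  have "p \<in> (\<lambda>x. lmul x p) ` one_ext U" by (rule image_eqI[of _ _ None]) (simp_all add: one_ext_def)
  then obtain z where "p = lmul z e" using im by auto
  moreover have "e*e = e" using assms(2) by (simp add: idems_def)
  ultimately have 1: "p*e = p" by (simp add: lmul_assoc[symmetric])
  have "e \<in> (\<lambda>x. lmul x e) ` one_ext U" by (rule image_eqI[of _ _ None]) (simp_all add: one_ext_def)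
  then obtain w where "e = lmul w p" using im by auto
  moreover have "p*p = p" using assms(3) by (simp add: idems_def)
  ultimately have 2: "e*p = e" by (simp add: lmul_assoc[symmetric])
  show ?thesis using 1 2 by simp
qed

lemma greenR_idem:
  assumes "greenR U f q" "f \<in> idems U" "q \<in> idems U"
  shows "f*q = q \<and> q*f = f"
proof -
  have im: "(\<lambda>x. rmul f x) ` one_ext U = (\<lambda>x. rmul q x) ` one_ext U"
    using assms(1) by (simp add: greenR_def)
  have "q \<in> (\<lambda>x. rmul q x) ` one_ext U" by (rule image_eqI[of _ _ None]) (simp_all add: one_ext_def)
  then obtain z where "q = rmul f z" using im by auto
  moreover have "f*f = f" using assms(2) by (simp add: idems_def)
  ultimately have 1: "f*q = q" by (simp add: rmul_assoc[symmetric])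
  have "f \<in> (\<lambda>x. rmul f x) ` one_ext U" by (rule image_eqI[of _ _ None]) (simp_all add: one_ext_def)
  then obtain w where "f = rmul q w" using im by auto
  moreover have "q*q = q" using assms(3) by (simp add: idems_def)
  ultimately have 2: "q*f = f" by (simp add: rmul_assoc[symmetric])
  show ?thesis using 1 2 by simp
qed

theorem proposition4p1:
  fixes S S0 :: "'a::semigroup_mult set"
  assumes "quasi_adequate S"
    and "adequate_transversal S0 S"
  shows "orthodox S \<longleftrightarrow> inverse_semigroup S0"
proof -
  have qa: "abundant S" "\<And>e f. e \<in> idems S \<Longrightarrow> f \<in> idems S \<Longrightarrow> e*f \<in> idems S"
    using assms(1) by (auto simp: quasi_adequate_def)
  have ad0: "adequate S0" and ss: "star_subsemigroup S0 S"
    using assms(2) by (auto simp: adequate_transversal_def)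
  have sub: "S0 \<subseteq> S" using ss by (simp add: star_subsemigroup_def)
  have RS: "\<And>a b. a \<in> S0 \<Longrightarrow> b \<in> S0 \<Longrightarrow> Rstar S0 a b \<Longrightarrow> Rstar S a b"
   and LS: "\<And>a b. a \<in> S0 \<Longrightarrow> b \<in> S0 \<Longrightarrow> Lstar S0 a b \<Longrightarrow> Lstar S a b"
    using ss by (auto simp: star_subsemigroup_def)
  have tr: "\<And>x. x \<in> S \<Longrightarrow> \<exists>b\<in>S0. \<exists>e\<in>idems S. \<exists>f\<in>idems S.
        x = e * b * f \<and> greenL S e (plus S0 b) \<and> greenR S f (star S0 b)"
  proof -
    fix x assume "x \<in> S"
    hence "\<exists>!xb. xb \<in> S0 \<and> (\<exists>e\<in>idems S. \<exists>f\<in>idems S.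
        x = e * xb * f \<and> greenL S e (plus S0 xb) \<and> greenR S f (star S0 xb))"
      using assms(2) unfolding adequate_transversal_def by blast
    thus "\<exists>b\<in>S0. \<exists>e\<in>idems S. \<exists>f\<in>idems S.
        x = e * b * f \<and> greenL S e (plus S0 b) \<and> greenR S f (star S0 b)" by blast
  qed
  have subS: "subsemigroup S" using qa(1) by (simp add: abundant_def)
  have subS0: "subsemigroup S0" using ad0 by (simp add: adequate_def abundant_def)
  have cl: "\<And>a b. a \<in> S \<Longrightarrow> b \<in> S \<Longrightarrow> a*b \<in> S" using subS by (simp add: subsemigroup_def)
  have cl0: "\<And>a b. a \<in> S0 \<Longrightarrow> b \<in> S0 \<Longrightarrow> a*b \<in> S0" using subS0 by (simp add: subsemigroup_def)
  have comm0: "\<And>e f. e \<in> idems S0 \<Longrightarrow> f \<in> idems S0 \<Longrightarrow> e*f = f*e"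
    using ad0 by (simp add: adequate_def)
  have id0: "\<And>e. e \<in> idems S0 \<Longrightarrow> e \<in> idems S" using sub by (auto simp: idems_def)
  have i1: "orthodox S \<longleftrightarrow> regular S" using qa by (auto simp: orthodox_def)
  have i2: "inverse_semigroup S0 \<longleftrightarrow> regular S0" using comm0 by (auto simp: inverse_semigroup_def)
  have "regular S \<longleftrightarrow> regular S0"
  proof
    assume rS0: "regular S0"
    show "regular S" unfolding regular_def
    proof (intro conjI subS ballI)
      fix x assume x: "x \<in> S"
      obtain b e f where b: "b \<in> S0" and e: "e \<in> idems S" and f: "f \<in> idems S"
        and xe: "x = e * b * f" and gL: "greenL S e (plus S0 b)" and gR: "greenR S f (star S0 b)"
        using tr[OF x] by blast
      obtain c where c: "c \<in> S0" "b*c*b = b" using rS0 b by (auto simp: regular_def)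
      define b' where "b' = c*b*c"
      have b'0: "b' \<in> S0" using c b cl0 by (simp add: b'_def)
      have bb: "b*b'*b = b"
      proof -
        have "b*b'*b = (b*c*b)*(c*b)" by (simp add: b'_def mult.assoc)
        also have "\<dots> = b*c*b" using c by (simp add: mult.assoc[symmetric])
        finally show ?thesis using c by simp
      qed
      have bb': "b'*b*b' = b'"
      proof -
        have "b'*b*b' = c*(b*c*b)*c*b*c" by (simp add: b'_def mult.assoc)
        also have "\<dots> = c*b*c*b*c" using c by simp
        also have "\<dots> = c*(b*c*b)*c" by (simp add: mult.assoc)
        also have "\<dots> = b'" using c by (simp add: b'_def)
        finally show ?thesis .
      qed
      define p where "p = plus S0 b"
      define q where "q = star S0 b"
      have p: "p \<in> idems S0" "Rstar S0 b p" using plus_prop[OF ad0 b] by (auto simp: p_def)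
      have q: "q \<in> idems S0" "Lstar S0 b q" using star_prop[OF ad0 b] by (auto simp: q_def)
      have pb: "p*b = b" using Rstar_idem_left[OF p(2,1)] .
      have bq: "b*q = b" using Lstar_idem_right[OF q(2,1)] .
      have h: "(b*b')*p = p" using Rstar_use2[OF p(2), of "b*b'"] cl0 b b'0 bb by simp
      have bbI: "b*b' \<in> idems S0"
      proof -
        have "(b*b')*(b*b') = (b*b'*b)*b'" by (simp add: mult.assoc)
        also have "\<dots> = b*b'" using bb by simp
        finally show ?thesis using cl0 b b'0 by (simp add: idems_def)
      qed
      have pe: "p = b*b'"
      proof -
        have "p = (b*b')*p" using h by simp
        also have "\<dots> = p*(b*b')" by (rule comm0[OF bbI p(1)])
        also have "\<dots> = (p*b)*b'" by (simp add: mult.assoc)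
        also have "\<dots> = b*b'" using pb by simp
        finally show ?thesis .
      qed
      have h2: "q*(b'*b) = q" using Lstar_use2[OF q(2), of "b'*b"] cl0 b b'0 bb by (simp add: mult.assoc)
      have bbI2: "b'*b \<in> idems S0"
      proof -
        have "(b'*b)*(b'*b) = (b'*b*b')*b" by (simp add: mult.assoc)
        also have "\<dots> = b'*b" using bb' by simp
        finally show ?thesis using cl0 b b'0 by (simp add: idems_def)
      qed
      have qe: "q = b'*b"
      proof -
        have "q = q*(b'*b)" using h2 by simp
        also have "\<dots> = (b'*b)*q" by (rule comm0[OF q(1) bbI2])
        also have "\<dots> = b'*(b*q)" by (simp add: mult.assoc)
        also have "\<dots> = b'*b" using bq by simp
        finally show ?thesis .
      qed
      have pe2: "p*e = p" using greenL_idem[OF gL[folded p_def] e id0[OF p(1)]] by simp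
      have fq: "f*q = q" using greenR_idem[OF gR[folded q_def] f id0[OF q(1)]] by simp
      have fb: "f*b' = b'"
      proof -
        have "f*b' = (f*(b'*b))*b'" using bb' by (simp add: mult.assoc)
        also have "\<dots> = (b'*b)*b'" using fq qe by simp
        also have "\<dots> = b'" using bb' by simp
        finally show ?thesis .
      qed
      have be: "b'*e = b'"
      proof -
        have "b'*e = (b'*b*b')*e" using bb' by simp
        also have "\<dots> = b'*((b*b')*e)" by (simp add: mult.assoc)
        also have "\<dots> = b'*(p*e)" using pe by simp
        also have "\<dots> = b'*p" using pe2 by simp
        also have "\<dots> = b'*b*b'" using pe by (simp add: mult.assoc)
        also have "\<dots> = b'" using bb' by simp
        finally show ?thesis .
      qed
      have "x*b'*x = e*b*(f*b')*e*b*f" using xe by (simp add: mult.assoc)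
      also have "\<dots> = e*b*(b'*e)*b*f" by (simp only: fb mult.assoc)
      also have "\<dots> = e*(b*b'*b)*f" by (simp only: be mult.assoc)
      also have "\<dots> = x" using bb xe by simp
      finally show "\<exists>y\<in>S. x*y*x = x" using b'0 sub by blast
    qed
  next
    assume rS: "regular S"
    show "regular S0" unfolding regular_def
    proof (intro conjI subS0 ballI)
      fix a assume a0: "a \<in> S0"
      have a: "a \<in> S" using a0 sub by blast
      obtain a' where a': "a' \<in> S" "a*a'*a = a" using rS a by (auto simp: regular_def)
      define ap where "ap = plus S0 a"
      define as where "as = star S0 a"
      have ap0: "ap \<in> idems S0" "Rstar S0 a ap" using plus_prop[OF ad0 a0] by (auto simp: ap_def)
      have as0: "as \<in> idems S0" "Lstar S0 a as" using star_prop[OF ad0 a0] by (auto simp: as_def)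
      have apS: "ap \<in> idems S" "ap \<in> S0" using id0 ap0 by (auto simp: idems_def)
      have asS: "as \<in> idems S" "as \<in> S0" using id0 as0 by (auto simp: idems_def)
      have RaS: "Rstar S a ap" using RS[OF a0 apS(2) ap0(2)] .
      have LaS: "Lstar S a as" using LS[OF a0 asS(2) as0(2)] .
      have apa: "ap*a = a" using Rstar_idem_left[OF ap0(2,1)] .
      have aas: "a*as = a" using Lstar_idem_right[OF as0(2,1)] .
      have h1: "(a*a')*ap = ap" using Rstar_use2[OF RaS, of "a*a'"] cl a a' by simp
      have h2: "as*(a'*a) = as" using Lstar_use2[OF LaS, of "a'*a"] cl a a' by (simp add: mult.assoc)
      define y where "y = as*a'*ap"
      have yS: "y \<in> S" using cl a' apS asS sub by (auto simp: y_def idems_def)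
      have ay: "a*y = ap"
      proof -
        have "a*y = (a*as)*a'*ap" by (simp add: y_def mult.assoc)
        thus ?thesis using aas h1 by (simp add: mult.assoc)
      qed
      have ya: "y*a = as"
      proof -
        have "y*a = as*a'*(ap*a)" by (simp add: y_def mult.assoc)
        thus ?thesis using apa h2 by (simp add: mult.assoc)
      qed
      have yay: "y*a*y = y"
      proof -
        have "y*a*y = as*a'*(ap*a)*as*a'*ap" by (simp add: y_def mult.assoc)
        also have "\<dots> = as*a'*(a*as)*a'*ap" using apa by (simp add: mult.assoc)
        also have "\<dots> = as*(a'*a*a')*ap" using aas by (simp add: mult.assoc)
        also have "\<dots> = (as*(a'*a))*a'*ap" by (simp add: mult.assoc)
        also have "\<dots> = y" using h2 by (simp add: y_def)
        finally show ?thesis .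
      qed
      obtain b e f where b: "b \<in> S0" and e: "e \<in> idems S" and f: "f \<in> idems S"
        and ye: "y = e * b * f" and gL: "greenL S e (plus S0 b)" and gR: "greenR S f (star S0 b)"
        using tr[OF yS] by blast
      define p where "p = plus S0 b"
      define q where "q = star S0 b"
      have p: "p \<in> idems S0" "Rstar S0 b p" using plus_prop[OF ad0 b] by (auto simp: p_def)
      have q: "q \<in> idems S0" "Lstar S0 b q" using star_prop[OF ad0 b] by (auto simp: q_def)
      have pS: "p \<in> idems S" "p \<in> S0" using id0 p by (auto simp: idems_def)
      have qS: "q \<in> idems S" "q \<in> S0" using id0 q by (auto simp: idems_def)
      have RbS: "Rstar S b p" using RS[OF b pS(2) p(2)] .
      have LbS: "Lstar S b q" using LS[OF b qS(2) q(2)] .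
      have pb: "p*b = b" using Rstar_idem_left[OF p(2,1)] .
      have bq: "b*q = b" using Lstar_idem_right[OF q(2,1)] .
      have pe: "p*e = p" and ep: "e*p = e" using greenL_idem[OF gL[folded p_def] e pS(1)] by auto
      have fq: "f*q = q" and qf: "q*f = f" using greenR_idem[OF gR[folded q_def] f qS(1)] by auto
      have ee: "e*e = e" and ff: "f*f = f" using e f by (auto simp: idems_def)
      have eS: "e \<in> S" and fS: "f \<in> S" using e f by (auto simp: idems_def)
      have bS: "b \<in> S" using b sub by blast
      have apS': "ap \<in> S" and asS': "as \<in> S" using apS asS by (auto simp: idems_def)
      have ey: "e*y = y" using ee ye by (simp add: mult.assoc[symmetric])
      have yf: "y*f = y" using ff ye by (simp add: mult.assoc)
      have eas: "e*as = as" using ey ya by (metis mult.assoc)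
      have apf: "ap*f = ap" using yf ay by (metis mult.assoc)
      have yas: "y = as*y" using yay ya by simp
      have yap: "y = y*ap" using yay ay by (simp add: mult.assoc)
      have "e*b = as*e*b"
      proof -
        have "e*b = e*b*(f*q)" using bq fq by (simp add: mult.assoc)
        also have "\<dots> = y*q" using ye by (simp add: mult.assoc)
        also have "\<dots> = as*y*q" by (rule arg_cong[where f="\<lambda>t. t*q"]) (rule yas)
        also have "\<dots> = as*e*(b*(f*q))" using ye by (simp add: mult.assoc)
        also have "\<dots> = as*e*b" using bq fq by simp
        finally show ?thesis .
      qed
      hence "e*p = (as*e)*p" using Rstar_use[OF RbS eS cl[OF asS' eS]] by simp
      hence ase: "as*e = e" using ep by (simp add: mult.assoc)
      have "b*f = b*(f*ap)"
      proof -
        have "b*f = (p*e)*b*f" using pb pe by (simp add: mult.assoc)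
        also have "\<dots> = p*y" using ye by (simp add: mult.assoc)
        also have "\<dots> = p*(y*ap)" by (rule arg_cong[where f="\<lambda>t. p*t"]) (rule yap)
        also have "\<dots> = (p*e)*b*f*ap" using ye by (simp add: mult.assoc)
        also have "\<dots> = b*(f*ap)" using pb pe by (simp add: mult.assoc)
        finally show ?thesis .
      qed
      hence qfe: "q*f = q*(f*ap)" using Lstar_use[OF LbS fS cl[OF fS apS']] by simp
      have fap: "f*ap = f"
      proof -
        have "f*ap = (q*f)*ap" using qf by simp
        also have "\<dots> = q*(f*ap)" by (simp add: mult.assoc)
        also have "\<dots> = q*f" using qfe by simp
        also have "\<dots> = f" using qf by simp
        finally show ?thesis .
      qed
      have pas: "(p*as)*(p*as) = p*as" using qa(2)[OF pS(1) asS(1)] by (simp add: idems_def)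
      have qap: "(ap*q)*(ap*q) = ap*q" using qa(2)[OF apS(1) qS(1)] by (simp add: idems_def)
      have asp: "as*p*as = as"
      proof -
        have "as*p*as = (e*p*as)*p*as" using ep eas by simp
        also have "\<dots> = e*((p*as)*(p*as))" by (simp add: mult.assoc)
        also have "\<dots> = e*(p*as)" using pas by simp
        also have "\<dots> = (e*p)*as" by (simp add: mult.assoc)
        also have "\<dots> = as" using ep eas by simp
        finally show ?thesis .
      qed
      have eq1: "e = as*p"
      proof -
        have "e = as*e" using ase by simp
        also have "\<dots> = as*p*as*e" using asp by simp
        also have "\<dots> = as*p" using ase pe by (simp add: mult.assoc)
        finally show ?thesis .
      qed
      have apq: "ap*q*ap = ap"
      proof -
        have "ap*q*ap = ap*q*(ap*f)" using apf by simp
        also have "\<dots> = (ap*q)*(ap*q)*f" using qf by (simp add: mult.assoc)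
        also have "\<dots> = ap" using qap qf apf by (simp add: mult.assoc)
        finally show ?thesis .
      qed
      have eq2: "f = q*ap"
      proof -
        have "f = f*ap" using fap by simp
        also have "\<dots> = f*(ap*q*ap)" using apq by simp
        also have "\<dots> = q*ap" using fq fap by (metis mult.assoc)
        finally show ?thesis .
      qed
      have "y = as*(p*b*q)*ap" using ye eq1 eq2 by (simp add: mult.assoc)
      hence yb: "y = as*b*ap" using pb bq by (simp add: mult.assoc)
      have "y \<in> S0" using yb cl0 asS(2) apS(2) b by simp
      moreover have "a*y*a = a" using ay apa by simp
      ultimately show "\<exists>x\<in>S0. a*x*a = a" by blast
    qed
  qed
  thus ?thesis using i1 i2 by simp
qed

end
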